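(* Let $X$ be a Hausdorff topological space and $f\colon X\to\mathbb R^n$ a continuous proper map. Suppose $S\subseteq X$ is a dense subset saturated by $f$ (i.e. a union of level sets of $f$) such that $f(S)$ is convex, the fibres of $f|_S$ are connected, and $f|_S\colon S\to f(S)$ is open. Then the fibres of $f$ are connected. *)

theory Defs
  imports "HOL-Analysis.Analysis"
begin

end

theory Submission
  imports Defs
begin

theorem lemma15:
  fixes X :: "'a topology" and f :: "'a \<Rightarrow> real^'n" and S :: "'a set"
  assumes "Hausdorff_space X"
    and "continuous_map X euclidean f"
    and "proper_map X euclidean f"
    and "S \<subseteq> topspace X"
    and "X closure_of S = topspace X"
    and "{x \<in> topspace X. f x \<in> f ` S} = S"
    and "convex (f ` S)"
    and "\<And>y. connectedin X {x \<in> S. f x = y}"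
    and "open_map (subtopology X S) (subtopology euclidean (f ` S)) f"
  shows "\<forall>y. connectedin X {x \<in> topspace X. f x = y}"
proof
  fix y
  define F where "F = {x \<in> topspace X. f x = y}"
  have Fc: "compactin X F" using assms(3) unfolding proper_map_def F_def by auto
  have Fcl: "closedin X F" using compactin_imp_closedin[OF assms(1) Fc] .
  show "connectedin X {x \<in> topspace X. f x = y}"
    unfolding F_def[symmetric]
  proof (rule ccontr)
    assume "\<not> connectedin X F"
    moreover have "F \<subseteq> topspace X" unfolding F_def by auto
    have "\<exists>E1 E2. openin X E1 \<and> openin X E2 \<and>
             F \<subseteq> E1 \<union> E2 \<and> E1 \<inter> E2 \<inter> F = {} \<and> E1 \<inter> F \<noteq> {} \<and> E2 \<inter> F \<noteq> {}"
    proof (rule ccontr)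
      assume H: "\<not> (\<exists>E1 E2. openin X E1 \<and> openin X E2 \<and>
             F \<subseteq> E1 \<union> E2 \<and> E1 \<inter> E2 \<inter> F = {} \<and> E1 \<inter> F \<noteq> {} \<and> E2 \<inter> F \<noteq> {})"
      have "connectedin X F" unfolding connectedin by (intro conjI \<open>F \<subseteq> topspace X\<close> H)
      then show False using \<open>\<not> connectedin X F\<close> by contradiction
    qed
    then obtain E1 E2 where E: "openin X E1" "openin X E2" "F \<subseteq> E1 \<union> E2"
      "E1 \<inter> E2 \<inter> F = {}" "E1 \<inter> F \<noteq> {}" "E2 \<inter> F \<noteq> {}"
      by blast
    define A where "A = F \<inter> (topspace X - E2)"
    define B where "B = F \<inter> (topspace X - E1)"
    have Acl: "closedin X A" unfolding A_def using Fcl E(2) by blast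
    have Bcl: "closedin X B" unfolding B_def using Fcl E(1) by blast
    have Ac: "compactin X A" by (rule closed_compactin[OF Fc _ Acl]) (auto simp: A_def)
    have Bc: "compactin X B" by (rule closed_compactin[OF Fc _ Bcl]) (auto simp: B_def)
    have dAB: "disjnt A B" using E(3) unfolding A_def B_def disjnt_def by auto
    then obtain U V where UV: "openin X U" "openin X V" "A \<subseteq> U" "B \<subseteq> V" "disjnt U V"
      using Hausdorff_space_compact_sets[THEN iffD1, OF assms(1), rule_format, OF conjI[OF Ac conjI[OF Bc dAB]]]
      by blast
    have FUV: "F \<subseteq> U \<union> V" using UV(3,4) E(4) unfolding A_def B_def F_def by auto
    have Ane: "A \<noteq> {}" using E(3,4,5) unfolding A_def F_def by auto
    have Bne: "B \<noteq> {}" using E(3,4,6) unfolding A_def F_def B_def by auto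
    define C where "C = topspace X - (U \<union> V)"
    have "closedin X C" unfolding C_def using UV by blast
    moreover have "closed_map X euclidean f" using assms(3) unfolding proper_map_def by blast
    ultimately have "closedin euclidean (f ` C)" unfolding closed_map_def by blast
    then have "closed (f ` C)" by simp
    moreover have "y \<notin> f ` C" using FUV unfolding C_def F_def by auto
    ultimately have "open (- (f ` C))" "y \<in> - (f ` C)" by auto
    then obtain e where e0: "e > 0" "ball y e \<subseteq> - (f ` C)"
      by (meson open_contains_ball)
    then have e: "e > 0" "ball y e \<inter> f ` C = {}" by auto
    define W where "W = ball y e"
    have WUV: "\<And>x. x \<in> topspace X \<Longrightarrow> f x \<in> W \<Longrightarrow> x \<in> U \<union> V"
      using e unfolding W_def C_def by auto
    define PU where "PU = U \<inter> {x \<in> topspace X. f x \<in> W} \<inter> S"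
    define PV where "PV = V \<inter> {x \<in> topspace X. f x \<in> W} \<inter> S"
    have oW: "openin X {x \<in> topspace X. f x \<in> W}"
      using openin_continuous_map_preimage[OF assms(2), of W] unfolding W_def by simp
    have "openin (subtopology X S) PU" unfolding PU_def openin_subtopology
      by (rule exI[where x="U \<inter> {x \<in> topspace X. f x \<in> W}"]) (use UV(1) oW in auto)
    then have oP: "openin (top_of_set (f ` S)) (f ` PU)" using assms(9) unfolding open_map_def by blast
    have "openin (subtopology X S) PV" unfolding PV_def openin_subtopology
      by (rule exI[where x="V \<inter> {x \<in> topspace X. f x \<in> W}"]) (use UV(2) oW in auto)
    then have oQ: "openin (top_of_set (f ` S)) (f ` PV)" using assms(9) unfolding open_map_def by blast
    have "PU \<noteq> {}"
    proof -
      obtain a where a: "a \<in> A" using Ane by auto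
      have "a \<in> U \<inter> {x \<in> topspace X. f x \<in> W}" using a UV(3) e(1) unfolding A_def F_def W_def by auto
      moreover have "openin X (U \<inter> {x \<in> topspace X. f x \<in> W})" using UV(1) oW by blast
      ultimately show ?thesis using assms(5) unfolding dense_intersects_open PU_def by blast
    qed
    have "PV \<noteq> {}"
    proof -
      obtain a where a: "a \<in> B" using Bne by auto
      have "a \<in> V \<inter> {x \<in> topspace X. f x \<in> W}" using a UV(4) e(1) unfolding B_def F_def W_def by auto
      moreover have "openin X (V \<inter> {x \<in> topspace X. f x \<in> W})" using UV(2) oW by blast
      ultimately show ?thesis using assms(5) unfolding dense_intersects_open PV_def by blast
    qed
    define K where "K = W \<inter> f ` S"
    have Kconn: "connected K" unfolding K_def W_def
      by (intro convex_connected convex_Int convex_ball assms(7))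
    have sub1: "f ` PU \<subseteq> K" "f ` PV \<subseteq> K" unfolding K_def PU_def PV_def by auto
    have cov: "K \<subseteq> f ` PU \<union> f ` PV"
    proof
      fix z assume "z \<in> K"
      then obtain x where x: "x \<in> S" "f x = z" "z \<in> W" unfolding K_def by auto
      then have "x \<in> U \<union> V" using WUV assms(4) by auto
      then show "z \<in> f ` PU \<union> f ` PV" using x assms(4) unfolding PU_def PV_def by auto
    qed
    have "f ` PU \<inter> f ` PV \<noteq> {}"
    proof
      assume "f ` PU \<inter> f ` PV = {}"
      moreover have "f ` PU \<noteq> {}" "f ` PV \<noteq> {}" using \<open>PU \<noteq> {}\<close> \<open>PV \<noteq> {}\<close> by auto
      moreover have "openin (top_of_set K) (f ` PU)" "openin (top_of_set K) (f ` PV)"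
        using openin_subset_trans[OF oP sub1(1)] openin_subset_trans[OF oQ sub1(2)] K_def by auto
      ultimately have "\<exists>E1 E2. openin (top_of_set K) E1 \<and>
                 openin (top_of_set K) E2 \<and>
                 K \<subseteq> E1 \<union> E2 \<and> E1 \<inter> E2 = {} \<and> E1 \<noteq> {} \<and> E2 \<noteq> {}"
        using cov by blast
      moreover have "\<not> (\<exists>E1 E2. openin (top_of_set K) E1 \<and>
                 openin (top_of_set K) E2 \<and>
                 K \<subseteq> E1 \<union> E2 \<and> E1 \<inter> E2 = {} \<and> E1 \<noteq> {} \<and> E2 \<noteq> {})"
        using Kconn unfolding connected_openin .
      ultimately show False by contradiction
    qed
    then obtain u v where uv: "u \<in> PU" "v \<in> PV" "f u = f v" by blast
    define G where "G = {x \<in> S. f x = f u}"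
    have "connectedin X G" unfolding G_def by (rule assms(8))
    moreover have "G \<subseteq> U \<union> V" using WUV assms(4) uv unfolding G_def PU_def by fastforce
    moreover have "U \<inter> V \<inter> G = {}" using UV(5) unfolding disjnt_def by auto
    moreover have "U \<inter> G \<noteq> {}" using uv unfolding G_def PU_def by auto
    moreover have "V \<inter> G \<noteq> {}" using uv unfolding G_def PV_def by auto
    ultimately have "\<exists>E1 E2.
             openin X E1 \<and> openin X E2 \<and>
             G \<subseteq> E1 \<union> E2 \<and> E1 \<inter> E2 \<inter> G = {} \<and> E1 \<inter> G \<noteq> {} \<and> E2 \<inter> G \<noteq> {}"
      using UV(1,2) by blast
    moreover have "\<not> (\<exists>E1 E2.
             openin X E1 \<and> openin X E2 \<and>
             G \<subseteq> E1 \<union> E2 \<and> E1 \<inter> E2 \<inter> G = {} \<and> E1 \<inter> G \<noteq> {} \<and> E2 \<inter> G \<noteq> {})"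
      using \<open>connectedin X G\<close> unfolding connectedin by (rule conjunct2)
    ultimately show False by contradiction
  qed
qed

end
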